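(* Let $0<r\le 1/2$, $0\le\rho\le 1$, and let $\alpha$ satisfy $0\le\alpha<r$, with $\alpha$ the asymptotic red edge fraction of the Biased Preferential Attachment Model described in the context. Define $$K_B=\frac12\left(\frac{r\rho}{\alpha+\rho(1-\alpha)}+\frac{1-r}{\alpha\rho+1-\alpha}\right),\qquad K_R=\frac12\left(\frac{r}{\alpha+\rho(1-\alpha)}+\frac{\rho(1-r)}{\alpha\rho+1-\alpha}\right),$$ and $\beta_B=1+1/K_B$, $\beta_R=1+1/K_R$. Then $$\frac{1}{\beta_R-1}>\frac{2}{\beta_B-1}-1,$$ equivalently $2K_B-1<K_R$.
   Context: In the BPAM, nodes arrive sequentially and are labeled red with probability $r$ (minority, $0<r\le1/2$) or blue with probability $1-r$. Each new node attaches by preferential attachment, with a cross-label edge accepted only with probability $\rho\in[0,1]$ (retrying otherwise), and every node has outdegree $d$. $\alpha$ denotes the limit as $N\to\infty$ of the expected fraction of the total degree $2Nd$ belonging to red nodes. It satisfies the power inequality $\alpha<r$. $\beta_B$ and $\beta_R$ are the power-law exponents of the asymptotic degree distributions of the blue and red communities, respectively. *)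

theory Defs
  imports Complex_Main
begin

text \<open>Constants K_B, K_R of the BPAM (blue/red degree-distribution constants),
  as functions of the minority probability r, the acceptance probability rho
  of cross-label edges, and the asymptotic red degree fraction alpha.\<close>

definition K_B :: "real \<Rightarrow> real \<Rightarrow> real \<Rightarrow> real" where
  "K_B r \<rho> \<alpha> = (1/2) * (r * \<rho> / (\<alpha> + \<rho> * (1 - \<alpha>)) + (1 - r) / (\<alpha> * \<rho> + 1 - \<alpha>))"

definition K_R :: "real \<Rightarrow> real \<Rightarrow> real \<Rightarrow> real" where
  "K_R r \<rho> \<alpha> = (1/2) * (r / (\<alpha> + \<rho> * (1 - \<alpha>)) + \<rho> * (1 - r) / (\<alpha> * \<rho> + 1 - \<alpha>))"

definition beta_B :: "real \<Rightarrow> real \<Rightarrow> real \<Rightarrow> real" where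
  "beta_B r \<rho> \<alpha> = 1 + 1 / K_B r \<rho> \<alpha>"

definition beta_R :: "real \<Rightarrow> real \<Rightarrow> real \<Rightarrow> real" where
  "beta_R r \<rho> \<alpha> = 1 + 1 / K_R r \<rho> \<alpha>"

end

theory Submission
  imports Defs
begin

theorem proposition5:
  fixes r \<rho> \<alpha> :: real
  assumes "0 < r" and "r \<le> 1/2"
    and "0 \<le> \<rho>" and "\<rho> \<le> 1"
    and "0 \<le> \<alpha>" and "\<alpha> < r"
  shows "1 / (beta_R r \<rho> \<alpha> - 1) > 2 / (beta_B r \<rho> \<alpha> - 1) - 1
         \<and> 2 * K_B r \<rho> \<alpha> - 1 < K_R r \<rho> \<alpha>"
proof -
  have red: "1 / (beta_R r \<rho> \<alpha> - 1) = K_R r \<rho> \<alpha>" "2 / (beta_B r \<rho> \<alpha> - 1) = 2 * K_B r \<rho> \<alpha>"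
    by (simp_all add: beta_R_def beta_B_def)
  define A where "A = \<alpha> + \<rho> * (1 - \<alpha>)"
  define B where "B = \<alpha> * \<rho> + 1 - \<alpha>"
  define s where "s = 1 - \<rho>"
  have s0: "0 \<le> s" "s \<le> 1" using assms by (auto simp: s_def)
  have a1: "\<alpha> < 1/2" using assms by linarith
  have Bpos: "B > 0"
  proof -
    have "\<alpha> * (1 - \<rho>) \<le> \<alpha>" using assms by (simp add: mult_left_le)
    then show ?thesis unfolding B_def using a1 by (simp add: algebra_simps)
  qed
  have key: "2 * K_B r \<rho> \<alpha> - 1 < K_R r \<rho> \<alpha>"
  proof (cases "A = 0")
    case True
    have "\<alpha> * (1 - \<rho>) \<ge> 0" "\<rho> \<ge> 0" using assms by auto
    moreover have "A = \<rho> + \<alpha> * (1 - \<rho>)" by (simp add: A_def algebra_simps)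
    ultimately have "\<rho> = 0" using True by linarith
    then have "\<alpha> = 0" using True A_def by simp
    show ?thesis using \<open>\<rho> = 0\<close> \<open>\<alpha> = 0\<close> assms by (simp add: K_B_def K_R_def)
  next
    case False
    have Ann: "A \<ge> 0" using assms unfolding A_def by simp
    with False have Apos: "A > 0" by simp
    have As: "A = 1 - s * (1 - \<alpha>)" "B = 1 - \<alpha> * s" "\<rho> = 1 - s"
      by (simp_all add: A_def B_def s_def algebra_simps)
    define E where "E = r * (1 - 2*\<rho>) * B + (1 - r) * (\<rho> - 2) * A + 2 * A * B"
    have Eid: "E = (1-s)^2 + \<alpha> * s * (1 + 2*\<alpha> - 3*\<alpha>*s) + (r - \<alpha>) * (s * (2 - s) * (1 + \<alpha>))"
      unfolding E_def As by (simp add: algebra_simps power2_eq_square)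
    have t2: "\<alpha> * s * (1 + 2*\<alpha> - 3*\<alpha>*s) \<ge> 0"
    proof -
      have "\<alpha> * s \<le> \<alpha>" using s0 assms by (simp add: mult_left_le)
      then have "1 + 2*\<alpha> - 3*\<alpha>*s \<ge> 0" using a1 by linarith
      then show ?thesis using s0 assms by simp
    qed
    have Epos: "E > 0"
    proof (cases "s = 0")
      case True then show ?thesis using Eid by simp
    next
      case False
      then have "s * (2 - s) * (1 + \<alpha>) > 0" using s0 assms by simp
      then have "(r - \<alpha>) * (s * (2 - s) * (1 + \<alpha>)) > 0" using assms by simp
      then show ?thesis using Eid t2 by (smt (verit) zero_le_power2)
    qed
    have KR: "K_R r \<rho> \<alpha> = (r * B + \<rho> * (1 - r) * A) / (2 * A * B)"
      unfolding K_R_def A_def[symmetric] B_def[symmetric]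
      using Apos Bpos by (simp add: add_divide_distrib)
    have KB: "K_B r \<rho> \<alpha> = (r * \<rho> * B + (1 - r) * A) / (2 * A * B)"
      unfolding K_B_def A_def[symmetric] B_def[symmetric]
      using Apos Bpos by (simp add: add_divide_distrib)
    have "K_R r \<rho> \<alpha> - (2 * K_B r \<rho> \<alpha> - 1) = E / (2 * A * B)"
    proof -
      have "K_R r \<rho> \<alpha> - (2 * K_B r \<rho> \<alpha> - 1) =
        ((r * B + \<rho> * (1 - r) * A) - 2 * (r * \<rho> * B + (1 - r) * A) + 2 * A * B) / (2 * A * B)"
        unfolding KR KB using Apos Bpos by (simp add: diff_divide_distrib add_divide_distrib)
      also have "\<dots> = E / (2 * A * B)" unfolding E_def by (simp add: algebra_simps)
      finally show ?thesis .
    qed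
    moreover have "E / (2 * A * B) > 0" using Epos Apos Bpos by simp
    ultimately show ?thesis by linarith
  qed
  show ?thesis using key red by simp
qed

end
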